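(* Let $\mathcal H$ be a complex Hilbert space of finite dimension $d\ge 2$. There is no quasi-probability representation $(\mu,\xi)$ of quantum theory on $\mathcal H$ (over any finite set $\Lambda$) that is non-negative, i.e. such that $\mu_\rho(\lambda)\ge 0$ for all $\rho\in\mathcal D(\mathcal H)$, $\lambda\in\Lambda$ and $\xi_E(\lambda)\in[0,1]$ for all $E\in\mathcal E(\mathcal H)$, $\lambda\in\Lambda$. Equivalently, every quasi-probability representation of quantum theory has negativity in its representation of states or of measurements (or both).
   Context: $\mathcal D(\mathcal H)$ denotes the set of density operators (positive semidefinite, trace one) on $\mathcal H$, $\mathcal E(\mathcal H)$ the set of effects (operators $E$ with $0\le E\le\mathbb 1$). A quasi-probability representation of quantum theory over a finite set $\Lambda$ is a pair of affine maps $\mu:\mathcal D(\mathcal H)\to\mathbb R^\Lambda$, $\rho\mapsto\mu_\rho$, and $\xi:\mathcal E(\mathcal H)\to\mathbb R^\Lambda$, $E\mapsto\xi_E$, such that for all $\rho\in\mathcal D(\mathcal H)$ and $E\in\mathcal E(\mathcal H)$: (a) $\mu_\rho(\lambda)\in\mathbb R$ and $\sum_{\lambda}\mu_\rho(\lambda)=1$; (b) $\xi_E(\lambda)\in\mathbb R$ and $\xi_{\mathbb 1}(\lambda)=1$ for all $\lambda$; (c) $\mathrm{Tr}(\rho E)=\sum_{\lambda\in\Lambda}\mu_\rho(\lambda)\xi_E(\lambda)$. *)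

theory Defs
  imports "HOL-Analysis.Analysis"
begin

text \<open>Operators on the finite-dimensional complex Hilbert space \<open>complex^'n\<close>
  (dimension \<open>CARD('n)\<close>) are represented by matrices \<open>complex^'n^'n\<close>.\<close>

definition adjoint_mat :: "complex^'n^'n \<Rightarrow> complex^'n^'n" where
  "adjoint_mat A = (\<chi> i j. cnj (A $ j $ i))"

definition hermitian_mat :: "complex^'n^'n \<Rightarrow> bool" where
  "hermitian_mat A \<longleftrightarrow> adjoint_mat A = A"

definition qform :: "complex^'n^'n \<Rightarrow> complex^'n \<Rightarrow> complex" where
  "qform A v = (\<Sum>i\<in>UNIV. cnj (v $ i) * (A *v v) $ i)"

definition psd :: "complex^'n^'n \<Rightarrow> bool" where
  "psd A \<longleftrightarrow> hermitian_mat A \<and> (\<forall>v. 0 \<le> Re (qform A v))"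

definition density_ops :: "(complex^'n^'n) set" where
  "density_ops = {\<rho>. psd \<rho> \<and> trace \<rho> = 1}"

definition effects :: "(complex^'n^'n) set" where
  "effects = {E. psd E \<and> psd (mat 1 - E)}"

definition affine_map_on :: "(complex^'n^'n) set \<Rightarrow> (complex^'n^'n \<Rightarrow> 'l \<Rightarrow> real) \<Rightarrow> bool" where
  "affine_map_on S f \<longleftrightarrow>
     (\<forall>A\<in>S. \<forall>B\<in>S. \<forall>t::real. 0 \<le> t \<and> t \<le> 1 \<longrightarrow>
        (\<forall>l. f (t *\<^sub>R A + (1 - t) *\<^sub>R B) l = t * f A l + (1 - t) * f B l))"

definition quasi_prob_rep ::
  "(complex^'n^'n \<Rightarrow> 'l::finite \<Rightarrow> real) \<Rightarrow> (complex^'n^'n \<Rightarrow> 'l \<Rightarrow> real) \<Rightarrow> bool" where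
  "quasi_prob_rep \<mu> \<xi> \<longleftrightarrow>
     affine_map_on density_ops \<mu> \<and> affine_map_on effects \<xi> \<and>
     (\<forall>\<rho>\<in>density_ops. (\<Sum>l\<in>UNIV. \<mu> \<rho> l) = 1) \<and>
     (\<forall>l. \<xi> (mat 1) l = 1) \<and>
     (\<forall>\<rho>\<in>density_ops. \<forall>E\<in>effects.
        trace (\<rho> ** E) = complex_of_real (\<Sum>l\<in>UNIV. \<mu> \<rho> l * \<xi> E l))"

definition nonneg_rep ::
  "(complex^'n^'n \<Rightarrow> 'l::finite \<Rightarrow> real) \<Rightarrow> (complex^'n^'n \<Rightarrow> 'l \<Rightarrow> real) \<Rightarrow> bool" where
  "nonneg_rep \<mu> \<xi> \<longleftrightarrow>
     (\<forall>\<rho>\<in>density_ops. \<forall>l. 0 \<le> \<mu> \<rho> l) \<and>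
     (\<forall>E\<in>effects. \<forall>l. 0 \<le> \<xi> E l \<and> \<xi> E l \<le> 1)"

end

theory Submission
  imports Defs
begin

definition Pm :: "real^'n \<Rightarrow> complex^'n^'n" where
  "Pm u = (\<chi> i j. complex_of_real (u$i * u$j))"

lemma Pm_herm: "hermitian_mat (Pm u)"
  by (simp add: hermitian_mat_def adjoint_mat_def Pm_def vec_eq_iff mult.commute)

lemma Pm_herm2: "hermitian_mat (mat 1 - Pm u)"
  by (simp add: hermitian_mat_def adjoint_mat_def Pm_def vec_eq_iff mult.commute mat_def)

lemma qform_Pm: "qform (Pm u) v = cnj (\<Sum>j\<in>UNIV. of_real (u$j) * v$j) * (\<Sum>j\<in>UNIV. of_real (u$j) * v$j)"
  by (simp add: qform_def Pm_def matrix_vector_mult_def sum_distrib_left sum_distrib_right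
        sum_product mult_ac)

lemma qform_diff: "qform (A - B) v = qform A v - qform B v"
  by (simp add: qform_def matrix_vector_mult_diff_rdistrib ring_distribs sum_subtractf)

lemma qform_I: "qform (mat 1) v = (\<Sum>i\<in>UNIV. cnj (v$i) * v$i)"
  by (simp add: qform_def)

lemma Re_cnj_mult: "Re (cnj z * z) = (Re z)^2 + (Im z)^2"
  by (simp add: power2_eq_square)

lemma Re_cnj_nonneg: "0 \<le> Re (cnj z * z)"
  unfolding Re_cnj_mult by simp

lemma Pm_psd: "psd (Pm u)"
  unfolding psd_def using Pm_herm by (simp only: qform_Pm Re_cnj_nonneg) simp

lemma Pm_psd2:
  fixes u :: "real^'n"
  assumes "inner u u = 1"
  shows "psd (mat 1 - Pm u)"
proof -
  have "0 \<le> Re (qform (mat 1 - Pm u) v)" for v :: "complex^'n"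
  proof -
    define x :: "real^'n" where "x = (\<chi> i. Re (v$i))"
    define y :: "real^'n" where "y = (\<chi> i. Im (v$i))"
    have re: "Re (\<Sum>j\<in>UNIV. of_real (u$j) * v$j) = inner u x"
      by (simp add: x_def inner_vec_def Re_sum)
    have im: "Im (\<Sum>j\<in>UNIV. of_real (u$j) * v$j) = inner u y"
      by (simp add: y_def inner_vec_def Im_sum)
    have I: "Re (qform (mat 1) v) = inner x x + inner y y"
      by (simp add: qform_I x_def y_def inner_vec_def Re_sum sum.distrib[symmetric])
    have cs1: "(inner u x)^2 \<le> inner x x"
      using Cauchy_Schwarz_ineq[of u x] assms by simp
    have cs2: "(inner u y)^2 \<le> inner y y"
      using Cauchy_Schwarz_ineq[of u y] assms by simp
    show ?thesis
    proof -
      have "Re (qform (mat 1 - Pm u) v) = (inner x x + inner y y) - ((inner u x)^2 + (inner u y)^2)"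
        by (simp only: qform_diff minus_complex.sel I qform_Pm Re_cnj_mult re im)
      thus ?thesis using cs1 cs2 by linarith
    qed
  qed
  then show ?thesis using Pm_herm2 by (simp add: psd_def)
qed

lemma trace_Pm: "trace (Pm u) = of_real (inner u u)"
  by (simp add: trace_def Pm_def inner_vec_def)

lemma trace_PP: "trace (Pm u ** Pm w) = of_real ((inner u w)^2)"
  by (simp add: trace_def Pm_def inner_vec_def matrix_matrix_mult_def power2_eq_square
      sum_product mult_ac)

lemma Pm_dens: "inner u u = 1 \<Longrightarrow> Pm u \<in> density_ops"
  by (simp add: density_ops_def Pm_psd trace_Pm)

lemma Pm_eff: "inner u u = 1 \<Longrightarrow> Pm u \<in> effects"
  by (simp add: effects_def Pm_psd Pm_psd2)

lemma xi_one:
  fixes \<mu> :: "complex^'n^'n \<Rightarrow> 'l::finite \<Rightarrow> real"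
  assumes q: "quasi_prob_rep \<mu> \<xi>" and nn: "nonneg_rep \<mu> \<xi>"
    and r: "\<rho> \<in> density_ops" "\<rho> \<in> effects" and tr: "trace (\<rho> ** \<rho>) = 1"
    and pos: "\<mu> \<rho> l > 0"
  shows "\<xi> \<rho> l = 1"
proof -
  have s1: "(\<Sum>l\<in>UNIV. \<mu> \<rho> l * \<xi> \<rho> l) = 1"
    using q r tr unfolding quasi_prob_rep_def by (metis of_real_eq_1_iff)
  have s2: "(\<Sum>l\<in>UNIV. \<mu> \<rho> l) = 1" using q r unfolding quasi_prob_rep_def by blast
  have "(\<Sum>l\<in>UNIV. \<mu> \<rho> l * (1 - \<xi> \<rho> l)) = 0"
    using s1 s2 by (simp add: right_diff_distrib sum_subtractf)
  moreover have "\<forall>l\<in>UNIV. 0 \<le> \<mu> \<rho> l * (1 - \<xi> \<rho> l)"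
    using nn r unfolding nonneg_rep_def by simp
  ultimately have "\<mu> \<rho> l * (1 - \<xi> \<rho> l) = 0"
    using sum_nonneg_eq_0_iff[of UNIV "\<lambda>l. \<mu> \<rho> l * (1 - \<xi> \<rho> l)"] by simp
  thus ?thesis using pos by simp
qed

lemma same_support:
  fixes \<mu> :: "complex^'n^'n \<Rightarrow> 'l::finite \<Rightarrow> real"
  assumes q: "quasi_prob_rep \<mu> \<xi>" and nn: "nonneg_rep \<mu> \<xi>"
    and r: "\<rho> \<in> density_ops" "\<rho> \<in> effects" and tr: "trace (\<rho> ** \<rho>) = 1"
    and s: "\<sigma> \<in> density_ops"
    and sup: "{l. \<mu> \<sigma> l > 0} = {l. \<mu> \<rho> l > 0}"
  shows "trace (\<sigma> ** \<rho>) = 1"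
proof -
  have eq: "\<mu> \<sigma> l * \<xi> \<rho> l = \<mu> \<sigma> l" for l
  proof (cases "\<mu> \<sigma> l > 0")
    case True
    then have "\<mu> \<rho> l > 0" using sup by blast
    then show ?thesis using xi_one[OF q nn r tr] by simp
  next
    case False
    moreover have "0 \<le> \<mu> \<sigma> l" using nn s unfolding nonneg_rep_def by blast
    ultimately have "\<mu> \<sigma> l = 0" by linarith
    then show ?thesis by simp
  qed
  have s2: "(\<Sum>l\<in>UNIV. \<mu> \<sigma> l) = 1" using q s unfolding quasi_prob_rep_def by blast
  have "(\<Sum>l\<in>UNIV. \<mu> \<sigma> l * \<xi> \<rho> l) = 1"
    using s2 by (simp only: eq)
  moreover have "trace (\<sigma> ** \<rho>) = complex_of_real (\<Sum>l\<in>UNIV. \<mu> \<sigma> l * \<xi> \<rho> l)"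
    using q s r unfolding quasi_prob_rep_def by blast
  ultimately show ?thesis by simp
qed

theorem theorem2:
  fixes \<mu> :: "complex^'n^'n \<Rightarrow> 'l::finite \<Rightarrow> real"
    and \<xi> :: "complex^'n^'n \<Rightarrow> 'l \<Rightarrow> real"
  assumes "CARD('n) \<ge> 2"
  shows "\<not> (quasi_prob_rep \<mu> \<xi> \<and> nonneg_rep \<mu> \<xi>)"
proof
  assume H: "quasi_prob_rep \<mu> \<xi> \<and> nonneg_rep \<mu> \<xi>"
  then have q: "quasi_prob_rep \<mu> \<xi>" and nn: "nonneg_rep \<mu> \<xi>" by auto
  obtain a b :: 'n where ab: "a \<noteq> b"
  proof -
    have "\<not> (\<forall>a1\<in>(UNIV::'n set). \<forall>a2\<in>UNIV. a1 = a2)"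
      using card_le_Suc0_iff_eq[of "UNIV::'n set"] assms by simp
    then show ?thesis using that by blast
  qed
  define u :: "real \<Rightarrow> real^'n" where
    "u t = cos t *\<^sub>R axis a 1 + sin t *\<^sub>R axis b 1" for t
  have uu: "inner (u s) (u t) = cos (s - t)" for s t
    using ab by (simp add: u_def inner_add_left inner_add_right inner_axis_axis cos_diff)
  have u1: "inner (u t) (u t) = 1" for t using uu[of t t] by simp
  define f where "f t = {l. \<mu> (Pm (u t)) l > 0}" for t
  have "\<not> inj_on f {0<..<1::real}"
  proof
    assume "inj_on f {0<..<1::real}"
    moreover have "finite (f ` {0<..<1})" by simp
    ultimately have "finite {0<..<1::real}" using finite_imageD by blast
    thus False using infinite_Ioo[of "0::real" 1] by simp
  qed
  then obtain s t :: real where st: "s \<in> {0<..<1}" "t \<in> {0<..<1}" "s \<noteq> t" "f s = f t"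
    unfolding inj_on_def by blast
  have "trace (Pm (u s) ** Pm (u t)) = 1"
    apply (rule same_support[OF q nn Pm_dens[OF u1] Pm_eff[OF u1] _ Pm_dens[OF u1]])
    using st(4) by (auto simp: trace_PP u1 f_def)
  then have "complex_of_real ((cos (s - t))^2) = 1" by (simp only: trace_PP uu)
  then have c: "(cos (s - t))^2 = 1" using of_real_eq_1_iff by blast
  have "(sin (s - t))^2 = 0" using c sin_cos_squared_add[of "s - t"] by linarith
  then have "sin (s - t) = 0" by simp
  moreover have "\<bar>s - t\<bar> < pi" using st pi_gt3 by auto
  ultimately have "s - t = 0" using sin_zero_pi_iff by blast
  thus False using st by simp
qed

end
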